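(* Let $K_1$ and $K_2$ be oriented Legendrian knots of the same topological knot type with $tb(K_1)=-tb(K_2)$ and $rot(K_1)=-rot(K_2)$. Then for every permutation GL-rack $(X,\ast,u,d)$, $\operatorname{Col}_X(K_1)=\operatorname{Col}_X(K_2)$.
   Context: A rack is a set $X$ with a binary operation $\ast$ such that for every $y\in X$ the map $x\mapsto x\ast y$ is a bijection of $X$ and $(x\ast y)\ast z=(x\ast z)\ast(y\ast z)$ for all $x,y,z$. A GL-rack is a quadruple $(X,\ast,u,d)$ where $(X,\ast)$ is a rack and $u,d\colon X\to X$ are maps such that for all $x,y\in X$: $u(d(x\ast x))=d(u(x\ast x))=x$; $u(x\ast y)=u(x)\ast y$ and $d(x\ast y)=d(x)\ast y$; $x\ast u(y)=x\ast d(y)=x\ast y$. A permutation GL-rack is a GL-rack with $X$ finite and $x\ast y=\sigma(x)$ for all $x,y$, for a permutation $\sigma$ of $X$, with $u\circ d=\sigma^{-1}$. Legendrian knots lie in $(\mathbb{R}^3,\xi_{\mathrm{std}})$, $\xi_{\mathrm{std}}=\mathrm{span}\{\partial_y,\partial_x+y\partial_z\}$, and are represented by oriented front diagrams. For a front diagram $D$ of $K$ with writhe $w(D)$, $u(D)$ cusps traversed upward and $d(D)$ cusps traversed downward, $tb(K)=w(D)-\frac12(u(D)+d(D))$ and $rot(K)=\frac12(d(D)-u(D))$. Given a finite GL-rack $X$, a coloring of $D$ is an assignment of elements of $X$ to the semi-arcs of $D$ (segments bounded by undercrossings or cusps) such that, following the orientation through a cusp, the color changes from $x$ to $u(x)$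 if the cusp is traversed upward and to $d(x)$ if traversed downward; and at each crossing whose over-strand is colored $y$, if the under semi-arc on the right of the oriented over-strand is colored $x$, the one on its left is colored $x\ast y$. $\operatorname{Col}_X(K)$ is the number of colorings; it is a Legendrian isotopy invariant. *)

theory Defs
  imports "HOL-Analysis.Analysis"
begin

definition rack :: "'a set \<Rightarrow> ('a \<Rightarrow> 'a \<Rightarrow> 'a) \<Rightarrow> bool" where
  "rack X op \<longleftrightarrow>
     (\<forall>x\<in>X. \<forall>y\<in>X. op x y \<in> X) \<and>
     (\<forall>y\<in>X. bij_betw (\<lambda>x. op x y) X X) \<and>
     (\<forall>x\<in>X. \<forall>y\<in>X. \<forall>z\<in>X. op (op x y) z = op (op x z) (op y z))"

definition GL_rack :: "'a set \<Rightarrow> ('a \<Rightarrow> 'a \<Rightarrow> 'a) \<Rightarrow> ('a \<Rightarrow> 'a) \<Rightarrow> ('a \<Rightarrow> 'a) \<Rightarrow> bool" where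
  "GL_rack X op u d \<longleftrightarrow>
     rack X op \<and>
     (\<forall>x\<in>X. u x \<in> X) \<and> (\<forall>x\<in>X. d x \<in> X) \<and>
     (\<forall>x\<in>X. u (d (op x x)) = x \<and> d (u (op x x)) = x) \<and>
     (\<forall>x\<in>X. \<forall>y\<in>X. u (op x y) = op (u x) y \<and> d (op x y) = op (d x) y) \<and>
     (\<forall>x\<in>X. \<forall>y\<in>X. op x (u y) = op x y \<and> op x (d y) = op x y)"

definition perm_GL_rack :: "'a set \<Rightarrow> ('a \<Rightarrow> 'a \<Rightarrow> 'a) \<Rightarrow> ('a \<Rightarrow> 'a) \<Rightarrow> ('a \<Rightarrow> 'a) \<Rightarrow> bool" where
  "perm_GL_rack X op u d \<longleftrightarrow>
     finite X \<and> GL_rack X op u d \<and>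
     (\<exists>\<sigma>. bij_betw \<sigma> X X \<and> (\<forall>x\<in>X. \<forall>y\<in>X. op x y = \<sigma> x) \<and>
          (\<forall>x\<in>X. u (d x) = the_inv_into X \<sigma> x))"

text \<open>A knot is a 1-periodic map gamma : real => R^3 (points written (x,y,z)),
  injective on [0,1); the orientation is the direction of increasing parameter.
  The front projection is (x,z); the y-axis points into the page, so at a crossing
  the strand with smaller y (= smaller slope dz/dx) is the over-strand.\<close>

type_synonym R3 = "real \<times> real \<times> real"

definition gx :: "(real \<Rightarrow> R3) \<Rightarrow> real \<Rightarrow> real" where "gx \<gamma> t = fst (\<gamma> t)"
definition gy :: "(real \<Rightarrow> R3) \<Rightarrow> real \<Rightarrow> real" where "gy \<gamma> t = fst (snd (\<gamma> t))"
definition gz :: "(real \<Rightarrow> R3) \<Rightarrow> real \<Rightarrow> real" where "gz \<gamma> t = snd (snd (\<gamma> t))"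

definition dgx :: "(real \<Rightarrow> R3) \<Rightarrow> real \<Rightarrow> real" where
  "dgx \<gamma> t = fst (vector_derivative \<gamma> (at t))"
definition dgz :: "(real \<Rightarrow> R3) \<Rightarrow> real \<Rightarrow> real" where
  "dgz \<gamma> t = snd (snd (vector_derivative \<gamma> (at t)))"

definition vderiv_op :: "(real \<Rightarrow> R3) \<Rightarrow> real \<Rightarrow> R3" where
  "vderiv_op g = (\<lambda>t. vector_derivative g (at t))"

definition smooth_curve :: "(real \<Rightarrow> R3) \<Rightarrow> bool" where
  "smooth_curve \<gamma> \<longleftrightarrow> (\<forall>n t. ((vderiv_op ^^ n) \<gamma>) differentiable (at t))"

text \<open>Legendrian: smooth embedded closed curve tangent to xi_std = span{d_y, d_x + y d_z},
  i.e. z' = y x'.\<close>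
definition legendrian_knot :: "(real \<Rightarrow> R3) \<Rightarrow> bool" where
  "legendrian_knot \<gamma> \<longleftrightarrow>
     smooth_curve \<gamma> \<and> (\<forall>t. \<gamma> (t + 1) = \<gamma> t) \<and> inj_on \<gamma> {0..<1} \<and>
     (\<forall>t. vector_derivative \<gamma> (at t) \<noteq> 0) \<and>
     (\<forall>t. dgz \<gamma> t = gy \<gamma> t * dgx \<gamma> t)"

definition cusps :: "(real \<Rightarrow> R3) \<Rightarrow> real set" where
  "cusps \<gamma> = {t \<in> {0..<1}. dgx \<gamma> t = 0}"

text \<open>A cusp is traversed upward if it goes from the lower branch to the upper branch,
  i.e. z - y(t) x is strictly increasing near t (y(t) is the slope of the cusp).\<close>
definition cusp_up :: "(real \<Rightarrow> R3) \<Rightarrow> real \<Rightarrow> bool" where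
  "cusp_up \<gamma> t \<longleftrightarrow> (\<exists>e>0. strict_mono_on {t-e<..<t+e} (\<lambda>r. gz \<gamma> r - gy \<gamma> t * gx \<gamma> r))"

definition cusp_down :: "(real \<Rightarrow> R3) \<Rightarrow> real \<Rightarrow> bool" where
  "cusp_down \<gamma> t \<longleftrightarrow> (\<exists>e>0. strict_mono_on {t-e<..<t+e} (\<lambda>r. - (gz \<gamma> r - gy \<gamma> t * gx \<gamma> r)))"

definition crossings :: "(real \<Rightarrow> R3) \<Rightarrow> (real \<times> real) set" where
  "crossings \<gamma> = {(t, s). t \<in> {0..<1} \<and> s \<in> {0..<1} \<and> t \<noteq> s \<and>
                          gx \<gamma> t = gx \<gamma> s \<and> gz \<gamma> t = gz \<gamma> s}"

text \<open>(t,s): t is the parameter on the under-strand, s on the over-strand.\<close>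
definition undercrossings :: "(real \<Rightarrow> R3) \<Rightarrow> (real \<times> real) set" where
  "undercrossings \<gamma> = {(t, s) \<in> crossings \<gamma>. gy \<gamma> s < gy \<gamma> t}"

definition generic_front :: "(real \<Rightarrow> R3) \<Rightarrow> bool" where
  "generic_front \<gamma> \<longleftrightarrow>
     finite (cusps \<gamma>) \<and> finite (crossings \<gamma>) \<and>
     (\<forall>t\<in>cusps \<gamma>. (cusp_up \<gamma> t \<or> cusp_down \<gamma> t) \<and>
                     (\<exists>a. a \<noteq> 0 \<and> (dgx \<gamma> has_real_derivative a) (at t))) \<and>
     (\<forall>(t, s)\<in>crossings \<gamma>. t \<notin> cusps \<gamma> \<and> s \<notin> cusps \<gamma>) \<and>
     (\<forall>t\<in>{0..<1}. \<forall>s\<in>{0..<1}. \<forall>r\<in>{0..<1}. t \<noteq> s \<and> s \<noteq> r \<and> t \<noteq> r \<longrightarrow>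
        \<not> (gx \<gamma> t = gx \<gamma> s \<and> gz \<gamma> t = gz \<gamma> s \<and> gx \<gamma> t = gx \<gamma> r \<and> gz \<gamma> t = gz \<gamma> r))"

text \<open>Positive iff the under-strand passes from the
  right to the left of the oriented over-strand, iff the crossing is positive.\<close>
definition front_cross :: "(real \<Rightarrow> R3) \<Rightarrow> real \<Rightarrow> real \<Rightarrow> real" where
  "front_cross \<gamma> s t = dgx \<gamma> s * dgz \<gamma> t - dgz \<gamma> s * dgx \<gamma> t"

definition writhe :: "(real \<Rightarrow> R3) \<Rightarrow> int" where
  "writhe \<gamma> = (\<Sum>(t, s)\<in>undercrossings \<gamma>. if front_cross \<gamma> s t > 0 then 1 else -1)"

definition n_up :: "(real \<Rightarrow> R3) \<Rightarrow> nat" where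
  "n_up \<gamma> = card {t \<in> cusps \<gamma>. cusp_up \<gamma> t}"

definition n_down :: "(real \<Rightarrow> R3) \<Rightarrow> nat" where
  "n_down \<gamma> = card {t \<in> cusps \<gamma>. cusp_down \<gamma> t}"

definition tb :: "(real \<Rightarrow> R3) \<Rightarrow> real" where
  "tb \<gamma> = real_of_int (writhe \<gamma>) - (real (n_up \<gamma>) + real (n_down \<gamma>)) / 2"

definition rot :: "(real \<Rightarrow> R3) \<Rightarrow> real" where
  "rot \<gamma> = (real (n_down \<gamma>) - real (n_up \<gamma>)) / 2"

definition same_knot_type :: "(real \<Rightarrow> R3) \<Rightarrow> (real \<Rightarrow> R3) \<Rightarrow> bool" where
  "same_knot_type \<gamma>1 \<gamma>2 \<longleftrightarrow>
     (\<exists>H :: real \<Rightarrow> R3 \<Rightarrow> R3.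
        continuous_on ({0..1} \<times> UNIV) (\<lambda>(s, p). H s p) \<and>
        (\<forall>s\<in>{0..1}. \<exists>g. homeomorphism UNIV UNIV (H s) g) \<and>
        H 0 = id \<and> H 1 ` range \<gamma>1 = range \<gamma>2)"

text \<open>Break parameters: cusps and under-crossing parameters. Semi-arcs are the open
  parameter intervals between consecutive breaks (mod 1).\<close>
definition breaks :: "(real \<Rightarrow> R3) \<Rightarrow> real set" where
  "breaks \<gamma> = cusps \<gamma> \<union> fst ` undercrossings \<gamma>"

definition breaks_per :: "(real \<Rightarrow> R3) \<Rightarrow> real set" where
  "breaks_per \<gamma> = {t. t - of_int \<lfloor>t\<rfloor> \<in> breaks \<gamma>}"

text \<open>A coloring is a 1-periodic X-valued function of the parameter, locally constant away
  from breaks (hence constant on semi-arcs), with the jump rules at cusps and undercrossings.\<close>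
definition is_coloring :: "'a set \<Rightarrow> ('a \<Rightarrow> 'a \<Rightarrow> 'a) \<Rightarrow> ('a \<Rightarrow> 'a) \<Rightarrow> ('a \<Rightarrow> 'a)
      \<Rightarrow> (real \<Rightarrow> R3) \<Rightarrow> (real \<Rightarrow> 'a) \<Rightarrow> bool" where
  "is_coloring X op u d \<gamma> c \<longleftrightarrow>
     (\<forall>t. c t \<in> X) \<and> (\<forall>t. c (t + 1) = c t) \<and>
     (\<forall>t. t \<notin> breaks_per \<gamma> \<longrightarrow> (\<exists>e>0. \<forall>r. \<bar>r - t\<bar> < e \<longrightarrow> c r = c t)) \<and>
     (\<forall>t\<in>cusps \<gamma>. \<exists>e>0. \<forall>r1\<in>{t-e<..<t}. \<forall>r2\<in>{t<..<t+e}.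
         (cusp_up \<gamma> t \<longrightarrow> c r2 = u (c r1)) \<and> (cusp_down \<gamma> t \<longrightarrow> c r2 = d (c r1))) \<and>
     (\<forall>(t, s)\<in>undercrossings \<gamma>. \<exists>e>0. \<forall>r1\<in>{t-e<..<t}. \<forall>r2\<in>{t<..<t+e}.
         (front_cross \<gamma> s t > 0 \<longrightarrow> c r2 = op (c r1) (c s)) \<and>
         (front_cross \<gamma> s t < 0 \<longrightarrow> c r1 = op (c r2) (c s)))"

text \<open>Col_X: number of colorings, i.e. of assignments to semi-arcs (values at break
  parameters are forgotten).\<close>
definition Col :: "'a set \<Rightarrow> ('a \<Rightarrow> 'a \<Rightarrow> 'a) \<Rightarrow> ('a \<Rightarrow> 'a) \<Rightarrow> ('a \<Rightarrow> 'a)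
      \<Rightarrow> (real \<Rightarrow> R3) \<Rightarrow> nat" where
  "Col X op u d \<gamma> =
     card ((\<lambda>c t. if t \<in> breaks_per \<gamma> then undefined else c t) ` {c. is_coloring X op u d \<gamma> c})"

end

theory Submission imports Defs begin

lemma const_interval:
  fixes c :: "real \<Rightarrow> 'a"
  assumes "a \<le> b" "\<forall>r\<in>{a..b}. \<exists>e>0. \<forall>r'. \<bar>r'-r\<bar> < e \<longrightarrow> c r' = c r"
  shows "c b = c a"
proof -
  have "c constant_on {a..b}"
  proof (rule locally_constant_imp_constant)
    show "connected {a..b}" by simp
    fix r assume r: "r \<in> {a..b}"
    then obtain e where e: "e>0" "\<forall>r'. \<bar>r'-r\<bar> < e \<longrightarrow> c r' = c r" using assms(2) by blast
    show "\<exists>T. openin (top_of_set {a..b}) T \<and> r \<in> T \<and> (\<forall>x\<in>T. c x = c r)"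
    proof (intro exI conjI)
      show "openin (top_of_set {a..b}) ({a..b} \<inter> ball r e)" by auto
      show "r \<in> {a..b} \<inter> ball r e" using r e by auto
      show "\<forall>x\<in>{a..b} \<inter> ball r e. c x = c r"
      proof
        fix x assume "x \<in> {a..b} \<inter> ball r e"
        then have "dist r x < e" by simp
        then have "\<bar>x - r\<bar> < e" by (simp add: dist_real_def abs_minus_commute)
        then show "c x = c r" using e(2) by blast
      qed
    qed
  qed
  then show ?thesis using assms(1) by (auto simp: constant_on_def)
qed

lemma sorted_snoc_set:
  fixes S :: "real set"
  assumes "finite S" "\<forall>b\<in>S. b < m"
  shows "sorted_list_of_set (insert m S) = sorted_list_of_set S @ [m]"
proof -
  have "sorted_wrt (<) (sorted_list_of_set S @ [m]) \<and> set (sorted_list_of_set S @ [m]) = insert m S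
        \<and> length (sorted_list_of_set S @ [m]) = card (insert m S)"
    using assms by (auto simp: sorted_wrt_append strict_sorted_list_of_set)
  moreover have "finite (insert m S)" using assms by simp
  ultimately show ?thesis using sorted_list_of_set_unique[of "insert m S" "sorted_list_of_set S @ [m]"] by blast
qed

locale circ =
  fixes X :: "'a set" and B :: "real set" and J :: "real \<Rightarrow> 'a \<Rightarrow> 'a"
  assumes finB: "finite B" and Bsub: "B \<subseteq> {0..<1}"
    and JX: "\<And>b x. b \<in> B \<Longrightarrow> x \<in> X \<Longrightarrow> J b x \<in> X"
begin

definition Bp where "Bp = {t. t - of_int \<lfloor>t\<rfloor> \<in> B}"
definition acol where "acol c \<longleftrightarrow> (\<forall>t. c t \<in> X) \<and> (\<forall>t. c (t+1) = c t) \<and>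
   (\<forall>t. t \<notin> Bp \<longrightarrow> (\<exists>e>0. \<forall>r. \<bar>r-t\<bar> < e \<longrightarrow> c r = c t)) \<and>
   (\<forall>b\<in>B. \<exists>e>0. \<forall>r1\<in>{b-e<..<b}. \<forall>r2\<in>{b<..<b+e}. c r2 = J b (c r1))"
definition Mx where "Mx = Max (insert 0 B)"
definition p where "p = (Mx - 1)/2"
definition Phi where "Phi t = fold (\<lambda>b g. J b \<circ> g) (sorted_list_of_set {b\<in>B. b<t}) id"
definition Phi1 where "Phi1 = fold (\<lambda>b g. J b \<circ> g) (sorted_list_of_set B) id"
definition sh where "sh t = t - of_int \<lfloor>t - p\<rfloor>"

lemma Mx: "0 \<le> Mx" "Mx < 1" "\<And>b. b\<in>B \<Longrightarrow> 0 \<le> b \<and> b \<le> Mx"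
proof -
  have fin: "finite (insert 0 B)" using finB by simp
  have "Mx \<in> insert 0 B" unfolding Mx_def using fin by (rule Max_in) simp
  then show "0 \<le> Mx" "Mx < 1" using Bsub by auto
  fix b assume "b \<in> B"
  then show "0 \<le> b \<and> b \<le> Mx" using Bsub fin unfolding Mx_def by auto
qed

lemma pf: "p < 0" "Mx < p + 1" "p + 1 < 1" "-1 < p" "p + 1 - (-p) = Mx"
  using Mx(1,2) by (auto simp: p_def field_simps)

lemma Bp_iff: assumes "p \<le> t" "t \<le> p+1" shows "t \<in> Bp \<longleftrightarrow> t \<in> B"
proof (cases "t < 0")
  case True
  then have "\<lfloor>t\<rfloor> = -1" using assms pf by (simp add: floor_eq_iff)
  moreover have "t + 1 \<notin> B" using Mx(3) pf assms by force
  moreover have "t \<notin> B" using Mx(3) True by force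
  ultimately show ?thesis by (simp add: Bp_def)
next
  case False
  then have "\<lfloor>t\<rfloor> = 0" using assms pf by (simp add: floor_eq_iff)
  then show ?thesis by (simp add: Bp_def)
qed

lemma Bp_per: "t + of_int k \<in> Bp \<longleftrightarrow> t \<in> Bp"
  by (simp add: Bp_def)

lemma fold_X: "set xs \<subseteq> B \<Longrightarrow> (\<forall>y\<in>X. g y \<in> X) \<Longrightarrow> x \<in> X \<Longrightarrow>
   fold (\<lambda>b g. J b \<circ> g) xs g x \<in> X"
proof (induction xs arbitrary: g)
  case Nil then show ?case by simp
next
  case (Cons a xs)
  have "\<forall>y\<in>X. (J a \<circ> g) y \<in> X" using Cons.prems JX by auto
  then show ?case using Cons by simp
qed

lemma Phi_X: "x \<in> X \<Longrightarrow> Phi t x \<in> X"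
  unfolding Phi_def by (rule fold_X) (use finB in auto)

lemma Phi_step:
  assumes "b \<in> B" "{b'\<in>B. b'<r2} = insert b {b'\<in>B. b'<r1}" "\<forall>b'\<in>{b'\<in>B. b'<r1}. b' < b"
  shows "Phi r2 = J b \<circ> Phi r1"
proof -
  have "finite {b'\<in>B. b'<r1}" using finB by simp
  then have "sorted_list_of_set {b'\<in>B. b'<r2} = sorted_list_of_set {b'\<in>B. b'<r1} @ [b]"
    using assms(2,3) sorted_snoc_set by simp
  then show ?thesis by (simp add: Phi_def)
qed

lemma Phi_empty: "\<forall>b\<in>B. t \<le> b \<Longrightarrow> Phi t = id"
proof -
  assume "\<forall>b\<in>B. t \<le> b"
  then have e: "{b\<in>B. b<t} = {}" by force
  show ?thesis unfolding Phi_def e by simp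
qed

lemma Phi_full: "\<forall>b\<in>B. b < t \<Longrightarrow> Phi t = Phi1"
proof -
  assume "\<forall>b\<in>B. b < t"
  then have "{b\<in>B. b<t} = B" by force
  then show ?thesis by (simp add: Phi_def Phi1_def)
qed

lemma Phi_p: "Phi p = id"
  using Mx(3) pf(1) by (intro Phi_empty) force

lemma Phi_p1: "Phi (p+1) = Phi1"
  using Mx(3) pf(2) by (intro Phi_full) force

lemma propag:
  assumes ac: "acol c"
  shows "t \<in> {p..p+1} \<Longrightarrow> t \<notin> B \<Longrightarrow> c t = Phi t (c p)"
proof (induction "card {b\<in>B. b<t}" arbitrary: t rule: less_induct)
  case less
  define S where "S = {b\<in>B. b<t}"
  have finS: "finite S" using finB by (simp add: S_def)
  have lc: "\<And>r. r \<in> {p..p+1} \<Longrightarrow> r \<notin> B \<Longrightarrow> \<exists>e>0. \<forall>r'. \<bar>r'-r\<bar> < e \<longrightarrow> c r' = c r"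
    using ac Bp_iff unfolding acol_def by auto
  show ?case
  proof (cases "S = {}")
    case True
    have "c t = c p"
    proof (rule const_interval)
      show "p \<le> t" using less.prems by simp
      show "\<forall>r\<in>{p..t}. \<exists>e>0. \<forall>r'. \<bar>r' - r\<bar> < e \<longrightarrow> c r' = c r"
      proof
        fix r assume r: "r \<in> {p..t}"
        have "r \<notin> B"
        proof
          assume "r \<in> B"
          then show False using True less.prems r unfolding S_def by (cases "r = t") auto
        qed
        moreover have "r \<in> {p..p+1}" using r less.prems by auto
        ultimately show "\<exists>e>0. \<forall>r'. \<bar>r' - r\<bar> < e \<longrightarrow> c r' = c r" using lc by blast
      qed
    qed
    moreover have "Phi t = id" unfolding Phi_def S_def[symmetric] True by simp
    ultimately show ?thesis by simp
  next
    case False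
    define m where "m = Max S"
    have mS: "m \<in> S" using False finS m_def by simp
    then have mB: "m \<in> B" and mt: "m < t" by (auto simp: S_def)
    have mge: "\<And>b. b \<in> S \<Longrightarrow> b \<le> m" using finS m_def by simp
    define S' where "S' = {b\<in>B. b<m}"
    have "S' \<subset> S" using mS mt unfolding S'_def S_def by auto
    then have cardS': "card S' < card S" using finS psubset_card_mono by blast
    obtain e where e: "e > 0" "\<forall>r1\<in>{m-e<..<m}. \<forall>r2\<in>{m<..<m+e}. c r2 = J m (c r1)"
      using ac mB unfolding acol_def by blast
    define lo where "lo = Max (insert p S')"
    have finS'': "finite (insert p S')" using finB by (simp add: S'_def)
    have plo: "p \<le> lo" using finS'' lo_def by simp
    have S'lo: "\<And>b. b \<in> S' \<Longrightarrow> b \<le> lo" using finS'' lo_def by simp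
    have "lo \<in> insert p S'" unfolding lo_def using finS'' by (rule Max_in) simp
    then have lom: "lo < m" using Mx(3)[OF mB] pf(1) unfolding S'_def by auto
    define r1 where "r1 = (max (m-e) lo + m)/2"
    have r1: "m - e < r1" "r1 < m" "lo < r1" using lom e(1) by (auto simp: r1_def)
    have r1p: "r1 \<in> {p..p+1}" using r1 plo Mx(3)[OF mB] pf(2) by auto
    have r1B: "r1 \<notin> B"
    proof
      assume "r1 \<in> B"
      then have "r1 \<in> S'" using r1 by (simp add: S'_def)
      then show False using S'lo r1 by force
    qed
    have setr1: "{b\<in>B. b<r1} = S'"
    proof
      show "{b \<in> B. b < r1} \<subseteq> S'" using r1 by (auto simp: S'_def)
      show "S' \<subseteq> {b \<in> B. b < r1}" using S'lo r1 by (force simp: S'_def)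
    qed
    have IH: "c r1 = Phi r1 (c p)"
      using less.hyps[of r1] cardS' setr1 r1p r1B unfolding S_def by simp
    define r2 where "r2 = (m + min (m+e) t)/2"
    have r2: "m < r2" "r2 < m + e" "r2 < t" using e(1) mt by (auto simp: r2_def)
    have "c t = c r2"
    proof (rule const_interval)
      show "r2 \<le> t" using r2 by simp
      show "\<forall>r\<in>{r2..t}. \<exists>e>0. \<forall>r'. \<bar>r' - r\<bar> < e \<longrightarrow> c r' = c r"
      proof
        fix r assume r: "r \<in> {r2..t}"
        have "r \<notin> B"
        proof
          assume rB: "r \<in> B"
          show False
          proof (cases "r = t")
            case True then show False using rB less.prems by simp
          next
            case False
            then have "r \<in> S" using rB r by (auto simp: S_def)
            then show False using mge r r2 by force
          qed
        qed
        moreover have "r \<in> {p..p+1}" using r less.prems r2 Mx(3)[OF mB] pf by auto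
        ultimately show "\<exists>e>0. \<forall>r'. \<bar>r' - r\<bar> < e \<longrightarrow> c r' = c r" using lc by blast
      qed
    qed
    also have "\<dots> = J m (c r1)" using e(2) r1 r2 by auto
    also have "Phi t = J m \<circ> Phi r1"
    proof (rule Phi_step[OF mB])
      show "{b' \<in> B. b' < t} = insert m {b' \<in> B. b' < r1}"
        unfolding setr1 S'_def using mge mB mt unfolding S_def by force
      show "\<forall>b'\<in>{b' \<in> B. b' < r1}. b' < m" unfolding setr1 S'_def by simp
    qed
    ultimately show ?thesis using IH by simp
  qed
qed


lemma per_nat: "acol c \<Longrightarrow> c (t + real n) = c t"
proof (induction n)
  case 0 then show ?case by simp
next
  case (Suc n)
  have "t + real (Suc n) = (t + real n) + 1" by simp
  then have "c (t + real (Suc n)) = c ((t + real n) + 1)" by metis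
  also have "\<dots> = c (t + real n)" using Suc.prems unfolding acol_def by blast
  finally show ?case using Suc by simp
qed

lemma per_int: assumes "acol c" shows "c (t + of_int k) = c t"
proof (cases "k \<ge> 0")
  case True
  then obtain n where k: "k = int n" using nonneg_int_cases by blast
  show ?thesis unfolding k using per_nat[OF assms, of t n] by simp
next
  case False
  obtain n where k: "- k = int n" using False by (intro that[of "nat (-k)"]) simp
  have "c ((t + of_int k) + real n) = c (t + of_int k)" using per_nat[OF assms] by blast
  moreover have "(t + of_int k) + real n = t"
  proof -
    have "real n = - of_int k" using k by (metis of_int_minus of_int_of_nat_eq)
    then show ?thesis by simp
  qed
  ultimately show ?thesis by simp
qed

lemma sh_floor: "of_int k \<le> r - p \<Longrightarrow> r - p < of_int k + 1 \<Longrightarrow> sh r = r - of_int k"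
  unfolding sh_def by (simp add: floor_unique)

lemma sh_range: "p \<le> sh t" "sh t < p + 1"
  unfolding sh_def by linarith+

lemma sh_Bp: "sh t \<in> Bp \<longleftrightarrow> t \<in> Bp"
  unfolding sh_def using Bp_per[of t "- \<lfloor>t - p\<rfloor>"] by simp

lemma sh_c: "acol c \<Longrightarrow> c (sh t) = c t"
  unfolding sh_def using per_int[of c t "- \<lfloor>t - p\<rfloor>"] by simp

lemma sh_p: "sh p = p" unfolding sh_def by simp

lemma p_notB: "p \<notin> B" using Mx(3) pf(1) by force
lemma p1_notB: "p + 1 \<notin> B" using Mx(3) pf(2) by force
lemma p_notBp: "p \<notin> Bp" using Bp_iff[of p] p_notB by simp

lemma Phi1_X: "x \<in> X \<Longrightarrow> Phi1 x \<in> X"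
  using Phi_X Phi_p1 by metis

lemma constructed:
  assumes x: "x \<in> X" "Phi1 x = x"
  shows "acol (\<lambda>t. Phi (sh t) x)"
  unfolding acol_def
proof (intro conjI allI impI ballI)
  fix t
  show "Phi (sh t) x \<in> X" using Phi_X x by simp
  have "\<lfloor>t + 1 - p\<rfloor> = \<lfloor>(t - p) + 1\<rfloor>" by (simp add: algebra_simps)
  also have "\<dots> = \<lfloor>t - p\<rfloor> + 1" using floor_add_int[of "t - p" 1] by simp
  finally have "sh (t+1) = sh t" unfolding sh_def by simp
  then show "Phi (sh (t + 1)) x = Phi (sh t) x" by simp
next
  fix t assume tBp: "t \<notin> Bp"
  define s where "s = sh t"
  define k where "k = \<lfloor>t - p\<rfloor>"
  have sdef: "s = t - of_int k" by (simp add: s_def sh_def k_def)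
  have sr: "p \<le> s" "s < p + 1" using sh_range s_def by auto
  have "s \<notin> Bp" using sh_Bp tBp s_def by simp
  then have sB: "s \<notin> B" using Bp_iff[of s] sr by auto
  show "\<exists>e>0. \<forall>r. \<bar>r - t\<bar> < e \<longrightarrow> Phi (sh r) x = Phi (sh t) x"
  proof (cases "s = p")
    case True
    show ?thesis
    proof (intro exI conjI allI impI)
      show "0 < -p" using pf by simp
      fix r assume r: "\<bar>r - t\<bar> < -p"
      have "Phi (sh t) x = x" using True s_def Phi_p by simp
      moreover have "Phi (sh r) x = x"
      proof (cases "r \<ge> t")
        case True
        have "sh r = r - of_int k" using \<open>s = p\<close> sdef r True pf by (intro sh_floor) auto
        then have "sh r < 0" using \<open>s = p\<close> sdef r True by auto
        then have "Phi (sh r) = id" using Mx(3) by (intro Phi_empty) force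
        then show ?thesis by simp
      next
        case False
        have "sh r = r - of_int (k - 1)" using \<open>s = p\<close> sdef r False pf by (intro sh_floor) auto
        then have "sh r > Mx" using \<open>s = p\<close> sdef r False pf(5) by auto
        then have "Phi (sh r) = Phi1" using Mx(3) by (intro Phi_full) force
        then show ?thesis using x by simp
      qed
      ultimately show "Phi (sh r) x = Phi (sh t) x" by simp
    qed
  next
    case False
    obtain \<delta> where d: "\<delta> > 0" "\<forall>b\<in>B. b \<noteq> s \<longrightarrow> \<delta> \<le> dist s b"
      using finite_set_avoid[OF finB] by blast
    define e where "e = min \<delta> (min (s - p) (p + 1 - s))"
    have e: "e > 0" using d False sr by (auto simp: e_def)
    show ?thesis
    proof (intro exI conjI allI impI)
      show "e > 0" by (rule e)
      fix r assume r: "\<bar>r - t\<bar> < e"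
      have shr: "sh r = s + (r - t)" using sdef r by (subst sh_floor[of k]) (auto simp: e_def)
      have "{b\<in>B. b < sh r} = {b\<in>B. b < s}"
      proof (intro Collect_cong conj_cong refl)
        fix b assume b: "b \<in> B"
        then have "\<delta> \<le> \<bar>s - b\<bar>" using d sB by (auto simp: dist_real_def)
        then show "b < sh r \<longleftrightarrow> b < s" using shr r by (auto simp: e_def)
      qed
      then show "Phi (sh r) x = Phi (sh t) x" unfolding Phi_def s_def by simp
    qed
  qed
next
  fix b assume bB: "b \<in> B"
  have bpos: "p < b" "b < p + 1" using Mx(3)[OF bB] pf by auto
  obtain \<delta> where d: "\<delta> > 0" "\<forall>b'\<in>B. b' \<noteq> b \<longrightarrow> \<delta> \<le> dist b b'"
    using finite_set_avoid[OF finB] by blast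
  define e where "e = min \<delta> (min (b - p) (p + 1 - b))"
  have e: "e > 0" using d bpos by (auto simp: e_def)
  have shr: "\<And>r. \<bar>r - b\<bar> < e \<Longrightarrow> sh r = r" using sh_floor[of 0] by (auto simp: e_def)
  have far: "\<And>b'. b' \<in> B \<Longrightarrow> b' \<noteq> b \<Longrightarrow> \<delta> \<le> \<bar>b - b'\<bar>" using d by (auto simp: dist_real_def)
  show "\<exists>e>0. \<forall>r1\<in>{b - e<..<b}. \<forall>r2\<in>{b<..<b + e}. Phi (sh r2) x = J b (Phi (sh r1) x)"
  proof (intro exI conjI ballI)
    show "e > 0" by (rule e)
    fix r1 r2 assume r1: "r1 \<in> {b - e<..<b}" and r2: "r2 \<in> {b<..<b + e}"
    have s1: "sh r1 = r1" using r1 by (intro shr) auto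
    have s2: "sh r2 = r2" using r2 by (intro shr) auto
    have set1: "{b'\<in>B. b' < r1} = {b'\<in>B. b' < b}"
    proof (intro Collect_cong conj_cong refl)
      fix b' assume b': "b' \<in> B"
      show "b' < r1 \<longleftrightarrow> b' < b"
      proof
        assume "b' < r1" then show "b' < b" using r1 by simp
      next
        assume "b' < b" then have "\<delta> \<le> \<bar>b - b'\<bar>" using far[OF b'] by simp
        then show "b' < r1" using r1 \<open>b' < b\<close> by (auto simp: e_def)
      qed
    qed
    have set2: "{b'\<in>B. b' < r2} = insert b {b'\<in>B. b' < r1}"
      unfolding set1
    proof (intro set_eqI iffI)
      fix b' assume "b' \<in> {b' \<in> B. b' < r2}"
      then have b': "b' \<in> B" "b' < r2" by auto
      show "b' \<in> insert b {b' \<in> B. b' < b}"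
      proof (cases "b' = b")
        case False
        then have "\<delta> \<le> \<bar>b - b'\<bar>" using far b' by simp
        then show ?thesis using b' r2 by (auto simp: e_def)
      qed simp
    next
      fix b' assume "b' \<in> insert b {b' \<in> B. b' < b}"
      then show "b' \<in> {b' \<in> B. b' < r2}" using bB r2 by auto
    qed
    have "Phi r2 = J b \<circ> Phi r1"
      by (rule Phi_step[OF bB set2]) (use r1 in auto)
    then show "Phi (sh r2) x = J b (Phi (sh r1) x)" using s1 s2 by simp
  qed
qed

definition R where "R c = (\<lambda>t. if t \<in> Bp then undefined else c t)"

theorem count: "card (R ` {c. acol c}) = card {x\<in>X. Phi1 x = x}"
proof (rule bij_betw_same_card)
  show "bij_betw (\<lambda>h. h p) (R ` {c. acol c}) {x\<in>X. Phi1 x = x}"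
  proof (rule bij_betw_imageI)
    have Rp: "\<And>c. R c p = c p" using p_notBp by (simp add: R_def)
    have into: "\<And>c. acol c \<Longrightarrow> c p \<in> X \<and> Phi1 (c p) = c p"
    proof -
      fix c assume ac: "acol c"
      have "c (p+1) = Phi (p+1) (c p)" using propag[OF ac, of "p+1"] p1_notB by simp
      moreover have "c (p+1) = c p" using ac unfolding acol_def by blast
      ultimately show "c p \<in> X \<and> Phi1 (c p) = c p" using ac Phi_p1 unfolding acol_def by simp
    qed
    show "inj_on (\<lambda>h. h p) (R ` {c. acol c})"
    proof (rule inj_onI)
      fix h1 h2 assume "h1 \<in> R ` {c. acol c}" "h2 \<in> R ` {c. acol c}" and eq: "h1 p = h2 p"
      then obtain c1 c2 where c: "acol c1" "acol c2" "h1 = R c1" "h2 = R c2" by auto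
      have cp: "c1 p = c2 p" using eq c Rp by metis
      show "h1 = h2"
      proof
        fix t
        show "h1 t = h2 t"
        proof (cases "t \<in> Bp")
          case True then show ?thesis using c by (simp add: R_def)
        next
          case False
          then have "sh t \<notin> Bp" using sh_Bp by simp
          then have sB: "sh t \<notin> B" using Bp_iff[of "sh t"] sh_range[of t] by auto
          have "sh t \<in> {p..p+1}" using sh_range less_imp_le by auto
          then have "c1 (sh t) = c2 (sh t)" using propag[OF c(1)] propag[OF c(2)] sB cp by simp
          moreover have "c1 (sh t) = c1 t" "c2 (sh t) = c2 t" using sh_c c by auto
          ultimately show ?thesis using c False by (simp add: R_def)
        qed
      qed
    qed
    show "(\<lambda>h. h p) ` R ` {c. acol c} = {x \<in> X. Phi1 x = x}"
    proof (intro set_eqI iffI)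
      fix x assume "x \<in> (\<lambda>h. h p) ` R ` {c. acol c}"
      then obtain c where ac: "acol c" and xc: "x = R c p" by auto
      have "x = c p" using xc Rp by simp
      then show "x \<in> {x \<in> X. Phi1 x = x}" using into[OF ac] by simp
    next
      fix x assume x: "x \<in> {x \<in> X. Phi1 x = x}"
      define c where "c = (\<lambda>t. Phi (sh t) x)"
      have "acol c" unfolding c_def using x by (intro constructed) auto
      moreover have "R c p = x" unfolding Rp c_def sh_p Phi_p by simp
      ultimately show "x \<in> (\<lambda>h. h p) ` R ` {c. acol c}" by force
    qed
  qed
qed

end


section \<open>Commuting maps\<close>

lemma comm_funpow1: "f \<circ> g = g \<circ> f \<Longrightarrow> f \<circ> g ^^ n = g ^^ n \<circ> f"
proof (induction n)
  case 0 then show ?case by simp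
next
  case (Suc n)
  have "f \<circ> g ^^ Suc n = (f \<circ> g) \<circ> g ^^ n" by (simp only: funpow.simps(2) comp_assoc)
  also have "\<dots> = g \<circ> (f \<circ> g ^^ n)" using Suc.prems by (simp only: comp_assoc)
  also have "\<dots> = g ^^ Suc n \<circ> f" using Suc by (simp only: funpow.simps(2) comp_assoc)
  finally show ?case .
qed

lemma comm_funpow2: "f \<circ> g = g \<circ> f \<Longrightarrow> f ^^ m \<circ> g ^^ n = g ^^ n \<circ> f ^^ m"
proof -
  assume h: "f \<circ> g = g \<circ> f"
  have "f \<circ> g ^^ n = g ^^ n \<circ> f" using comm_funpow1[OF h] .
  then have "g ^^ n \<circ> f = f \<circ> g ^^ n" by simp
  from comm_funpow1[OF this, of m] show ?thesis by simp
qed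

lemma funpow_comp_comm: "f \<circ> g = g \<circ> f \<Longrightarrow> (f \<circ> g) ^^ n = f ^^ n \<circ> g ^^ n"
proof (induction n)
  case 0 then show ?case by simp
next
  case (Suc n)
  have IH: "(f \<circ> g) ^^ n = f ^^ n \<circ> g ^^ n" using Suc by blast
  have "(f \<circ> g) ^^ Suc n = (f \<circ> g) \<circ> (f ^^ n \<circ> g ^^ n)" by (simp only: funpow.simps(2) IH)
  also have "\<dots> = f \<circ> (g \<circ> f ^^ n) \<circ> g ^^ n" by (simp only: comp_assoc)
  also have "g \<circ> f ^^ n = f ^^ n \<circ> g" using comm_funpow1[of g f n] Suc.prems by metis
  finally show ?case by (simp only: comp_assoc funpow.simps(2))
qed

definition F4 :: "('a \<Rightarrow> 'a) \<Rightarrow> ('a \<Rightarrow> 'a) \<Rightarrow> ('a \<Rightarrow> 'a) \<Rightarrow> ('a \<Rightarrow> 'a) \<Rightarrow> nat \<Rightarrow> nat \<Rightarrow> nat \<Rightarrow> nat \<Rightarrow> 'a \<Rightarrow> 'a" where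
  "F4 f0 f1 f2 f3 a b c d = f0 ^^ a \<circ> f1 ^^ b \<circ> f2 ^^ c \<circ> f3 ^^ d"

definition sel :: "('a \<Rightarrow> 'a) \<Rightarrow> ('a \<Rightarrow> 'a) \<Rightarrow> ('a \<Rightarrow> 'a) \<Rightarrow> ('a \<Rightarrow> 'a) \<Rightarrow> nat \<Rightarrow> 'a \<Rightarrow> 'a" where
  "sel f0 f1 f2 f3 i = (if i = 0 then f0 else if i = 1 then f1 else if i = 2 then f2 else f3)"

locale comm4 =
  fixes f0 f1 f2 f3 :: "'a \<Rightarrow> 'a"
  assumes c01: "f0 \<circ> f1 = f1 \<circ> f0" and c02: "f0 \<circ> f2 = f2 \<circ> f0" and c03: "f0 \<circ> f3 = f3 \<circ> f0"
    and c12: "f1 \<circ> f2 = f2 \<circ> f1" and c13: "f1 \<circ> f3 = f3 \<circ> f1" and c23: "f2 \<circ> f3 = f3 \<circ> f2"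
begin

abbreviation "F \<equiv> F4 f0 f1 f2 f3"

lemma F_add: "F a b c d \<circ> F a' b' c' d' = F (a+a') (b+b') (c+c') (d+d')"
proof -
  have x1: "f1 ^^ b \<circ> f0 ^^ a' = f0 ^^ a' \<circ> f1 ^^ b" using comm_funpow2[OF c01[symmetric]] .
  have x2: "f2 ^^ c \<circ> f0 ^^ a' = f0 ^^ a' \<circ> f2 ^^ c" using comm_funpow2[OF c02[symmetric]] .
  have x3: "f3 ^^ d \<circ> f0 ^^ a' = f0 ^^ a' \<circ> f3 ^^ d" using comm_funpow2[OF c03[symmetric]] .
  have y2: "f2 ^^ c \<circ> f1 ^^ b' = f1 ^^ b' \<circ> f2 ^^ c" using comm_funpow2[OF c12[symmetric]] .
  have y3: "f3 ^^ d \<circ> f1 ^^ b' = f1 ^^ b' \<circ> f3 ^^ d" using comm_funpow2[OF c13[symmetric]] .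
  have z3: "f3 ^^ d \<circ> f2 ^^ c' = f2 ^^ c' \<circ> f3 ^^ d" using comm_funpow2[OF c23[symmetric]] .
  have "F a b c d \<circ> F a' b' c' d' =
        f0 ^^ a \<circ> f1 ^^ b \<circ> f2 ^^ c \<circ> (f3 ^^ d \<circ> f0 ^^ a') \<circ> f1 ^^ b' \<circ> f2 ^^ c' \<circ> f3 ^^ d'"
    by (simp add: F4_def comp_assoc)
  also have "\<dots> = f0 ^^ a \<circ> f1 ^^ b \<circ> (f2 ^^ c \<circ> f0 ^^ a') \<circ> f3 ^^ d \<circ> f1 ^^ b' \<circ> f2 ^^ c' \<circ> f3 ^^ d'"
    unfolding x3 by (simp add: comp_assoc)
  also have "\<dots> = f0 ^^ a \<circ> (f1 ^^ b \<circ> f0 ^^ a') \<circ> f2 ^^ c \<circ> f3 ^^ d \<circ> f1 ^^ b' \<circ> f2 ^^ c' \<circ> f3 ^^ d'"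
    unfolding x2 by (simp add: comp_assoc)
  also have "\<dots> = f0 ^^ a \<circ> f0 ^^ a' \<circ> f1 ^^ b \<circ> f2 ^^ c \<circ> (f3 ^^ d \<circ> f1 ^^ b') \<circ> f2 ^^ c' \<circ> f3 ^^ d'"
    unfolding x1 by (simp add: comp_assoc)
  also have "\<dots> = f0 ^^ a \<circ> f0 ^^ a' \<circ> f1 ^^ b \<circ> (f2 ^^ c \<circ> f1 ^^ b') \<circ> f3 ^^ d \<circ> f2 ^^ c' \<circ> f3 ^^ d'"
    unfolding y3 by (simp add: comp_assoc)
  also have "\<dots> = f0 ^^ a \<circ> f0 ^^ a' \<circ> f1 ^^ b \<circ> f1 ^^ b' \<circ> f2 ^^ c \<circ> (f3 ^^ d \<circ> f2 ^^ c') \<circ> f3 ^^ d'"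
    unfolding y2 by (simp add: comp_assoc)
  also have "\<dots> = f0 ^^ a \<circ> f0 ^^ a' \<circ> f1 ^^ b \<circ> f1 ^^ b' \<circ> f2 ^^ c \<circ> f2 ^^ c' \<circ> f3 ^^ d \<circ> f3 ^^ d'"
    unfolding z3 by (simp add: comp_assoc)
  also have "\<dots> = F (a+a') (b+b') (c+c') (d+d')"
    by (simp add: F4_def funpow_add comp_assoc)
  finally show ?thesis .
qed

lemma F_sel: "i < 4 \<Longrightarrow> sel f0 f1 f2 f3 i =
   F (if i = 0 then 1 else 0) (if i = 1 then 1 else 0) (if i = 2 then 1 else 0) (if i = 3 then 1 else 0)"
  by (auto simp: F4_def sel_def)

definition cnt :: "('b \<Rightarrow> nat) \<Rightarrow> nat \<Rightarrow> 'b list \<Rightarrow> nat" where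
  "cnt L i xs = length (filter (\<lambda>b. L b = i) xs)"

lemma fold_F: "\<forall>b\<in>set xs. L b < 4 \<Longrightarrow>
  fold (\<lambda>b g. sel f0 f1 f2 f3 (L b) \<circ> g) xs h = F (cnt L 0 xs) (cnt L 1 xs) (cnt L 2 xs) (cnt L 3 xs) \<circ> h"
proof (induction xs arbitrary: h)
  case Nil then show ?case by (simp add: cnt_def F4_def)
next
  case (Cons x xs)
  have Lx: "L x < 4" using Cons.prems by simp
  have IH: "fold (\<lambda>b g. sel f0 f1 f2 f3 (L b) \<circ> g) xs (sel f0 f1 f2 f3 (L x) \<circ> h)
     = F (cnt L 0 xs) (cnt L 1 xs) (cnt L 2 xs) (cnt L 3 xs) \<circ> (sel f0 f1 f2 f3 (L x) \<circ> h)"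
    by (rule Cons.IH) (use Cons.prems in simp)
  have "fold (\<lambda>b g. sel f0 f1 f2 f3 (L b) \<circ> g) (x # xs) h
     = F (cnt L 0 xs) (cnt L 1 xs) (cnt L 2 xs) (cnt L 3 xs) \<circ> (sel f0 f1 f2 f3 (L x) \<circ> h)"
    by (simp only: fold.simps comp_apply IH)
  also have "\<dots> = (F (cnt L 0 xs) (cnt L 1 xs) (cnt L 2 xs) (cnt L 3 xs) \<circ> sel f0 f1 f2 f3 (L x)) \<circ> h"
    by (simp add: comp_assoc)
  also have "F (cnt L 0 xs) (cnt L 1 xs) (cnt L 2 xs) (cnt L 3 xs) \<circ> sel f0 f1 f2 f3 (L x)
      = F (cnt L 0 (x#xs)) (cnt L 1 (x#xs)) (cnt L 2 (x#xs)) (cnt L 3 (x#xs))"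
    unfolding F_sel[OF Lx] F_add using Lx by (auto simp: cnt_def)
  finally show ?case .
qed

end


section \<open>Permutation GL-racks\<close>

definition xt :: "'a set \<Rightarrow> ('a \<Rightarrow> 'a) \<Rightarrow> 'a \<Rightarrow> 'a" where
  "xt X g = (\<lambda>x. if x \<in> X then g x else x)"

locale prack =
  fixes X :: "'a set" and op :: "'a \<Rightarrow> 'a \<Rightarrow> 'a" and u d :: "'a \<Rightarrow> 'a" and \<sigma> :: "'a \<Rightarrow> 'a"
  assumes gl: "GL_rack X op u d" and bij: "bij_betw \<sigma> X X"
    and op\<sigma>: "\<forall>x\<in>X. \<forall>y\<in>X. op x y = \<sigma> x"
    and ud: "\<forall>x\<in>X. u (d x) = the_inv_into X \<sigma> x"
begin

definition si0 where "si0 = the_inv_into X \<sigma>"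
abbreviation "S \<equiv> xt X \<sigma>"
abbreviation "SI \<equiv> xt X si0"
abbreviation "UU \<equiv> xt X u"
abbreviation "DD \<equiv> xt X d"

lemma \<sigma>X: "x \<in> X \<Longrightarrow> \<sigma> x \<in> X" using bij bij_betwE by blast
lemma siX: "x \<in> X \<Longrightarrow> si0 x \<in> X"
  using bij_betw_the_inv_into[OF bij] bij_betwE unfolding si0_def by blast
lemma s_si: "x \<in> X \<Longrightarrow> \<sigma> (si0 x) = x"
  unfolding si0_def using f_the_inv_into_f_bij_betw[OF bij] by blast
lemma si_s: "x \<in> X \<Longrightarrow> si0 (\<sigma> x) = x"
  unfolding si0_def using the_inv_into_f_f bij bij_betw_imp_inj_on by metis
lemma uX: "x \<in> X \<Longrightarrow> u x \<in> X" using gl unfolding GL_rack_def by blast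
lemma dX: "x \<in> X \<Longrightarrow> d x \<in> X" using gl unfolding GL_rack_def by blast
lemma u_s: "x \<in> X \<Longrightarrow> u (\<sigma> x) = \<sigma> (u x)"
proof -
  assume x: "x \<in> X"
  have "u (op x x) = op (u x) x" using gl x unfolding GL_rack_def by blast
  then show ?thesis using op\<sigma> x uX by simp
qed
lemma d_s: "x \<in> X \<Longrightarrow> d (\<sigma> x) = \<sigma> (d x)"
proof -
  assume x: "x \<in> X"
  have "d (op x x) = op (d x) x" using gl x unfolding GL_rack_def by blast
  then show ?thesis using op\<sigma> x dX by simp
qed
lemma u_d: "x \<in> X \<Longrightarrow> u (d x) = si0 x" using ud si0_def by simp
lemma d_u: "x \<in> X \<Longrightarrow> d (u x) = si0 x"
proof -
  assume x: "x \<in> X"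
  define y where "y = si0 x"
  have y: "y \<in> X" using siX x y_def by simp
  have "d (u (op y y)) = y" using gl y unfolding GL_rack_def by blast
  moreover have "op y y = x" using op\<sigma> y s_si x y_def by simp
  ultimately show ?thesis using y_def by simp
qed
lemma u_si: "x \<in> X \<Longrightarrow> u (si0 x) = si0 (u x)"
proof -
  assume x: "x \<in> X"
  have "\<sigma> (u (si0 x)) = u x" using u_s[OF siX[OF x]] s_si[OF x] by simp
  then have "si0 (\<sigma> (u (si0 x))) = si0 (u x)" by simp
  then show ?thesis using si_s uX siX x by simp
qed
lemma d_si: "x \<in> X \<Longrightarrow> d (si0 x) = si0 (d x)"
proof -
  assume x: "x \<in> X"
  have "\<sigma> (d (si0 x)) = d x" using d_s[OF siX[OF x]] s_si[OF x] by simp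
  then have "si0 (\<sigma> (d (si0 x))) = si0 (d x)" by simp
  then show ?thesis using si_s dX siX x by simp
qed

lemmas ptw = \<sigma>X siX s_si si_s uX dX u_s d_s u_d d_u u_si d_si

lemma comm: "comm4 S SI UU DD"
  by unfold_locales (auto simp: fun_eq_iff xt_def ptw)

lemma S_SI: "S \<circ> SI = id" by (auto simp: fun_eq_iff xt_def ptw)
lemma UU_DD: "UU \<circ> DD = SI" by (auto simp: fun_eq_iff xt_def ptw)

lemma xt_X: "x \<in> X \<Longrightarrow> S x \<in> X \<and> SI x \<in> X \<and> UU x \<in> X \<and> DD x \<in> X"
  by (simp add: xt_def ptw)

lemma F_id: "F4 S SI UU DD (b + M) b M M = id"
proof -
  interpret comm4 S SI UU DD by (rule comm)
  have "F4 S SI UU DD (b + M) b M M = S ^^ (b+M) \<circ> (SI ^^ b \<circ> (UU ^^ M \<circ> DD ^^ M))"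
    by (simp only: F4_def comp_assoc)
  also have "UU ^^ M \<circ> DD ^^ M = SI ^^ M" using funpow_comp_comm[OF c23, of M] UU_DD by simp
  also have "SI ^^ b \<circ> SI ^^ M = SI ^^ (b + M)" by (simp only: funpow_add)
  also have "S ^^ (b+M) \<circ> SI ^^ (b + M) = id" using funpow_comp_comm[OF c01, of "b+M"] S_SI by simp
  finally show ?thesis .
qed

lemma Fix_eq:
  assumes "a + a' = b + b' + M" "c + c' = M" "e + e' = M"
  shows "{x\<in>X. F4 S SI UU DD a b c e x = x} = {x\<in>X. F4 S SI UU DD a' b' c' e' x = x}"
proof -
  interpret comm4 S SI UU DD by (rule comm)
  have 1: "F4 S SI UU DD a b c e \<circ> F4 S SI UU DD a' b' c' e' = id"
    unfolding F_add using assms F_id by simp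
  have 2: "F4 S SI UU DD a' b' c' e' \<circ> F4 S SI UU DD a b c e = id"
  proof -
    have "a' + a = (b' + b) + M" "c' + c = M" "e' + e = M" using assms by linarith+
    then show ?thesis unfolding F_add using F_id[of "b'+b" M] by simp
  qed
  show ?thesis
  proof (intro Collect_cong conj_cong refl iffI)
    fix x assume "F4 S SI UU DD a b c e x = x"
    then show "F4 S SI UU DD a' b' c' e' x = x" using 2 by (metis comp_apply id_apply)
  next
    fix x assume "F4 S SI UU DD a' b' c' e' x = x"
    then show "F4 S SI UU DD a b c e x = x" using 1 by (metis comp_apply id_apply)
  qed
qed

end


section \<open>Knots\<close>

locale knot = prack +
  fixes \<gamma> :: "real \<Rightarrow> R3"
  assumes leg: "legendrian_knot \<gamma>" and gen: "generic_front \<gamma>"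
begin

definition sf where "sf t = (SOME s. (t, s) \<in> undercrossings \<gamma>)"
definition L :: "real \<Rightarrow> nat" where
  "L t = (if t \<in> cusps \<gamma> then (if cusp_up \<gamma> t then 2 else 3)
          else if front_cross \<gamma> (sf t) t > 0 then 0 else 1)"
definition J where "J t = sel S SI UU DD (L t)"

lemma fin_cusps: "finite (cusps \<gamma>)" using gen unfolding generic_front_def by blast
lemma fin_cross: "finite (crossings \<gamma>)" using gen unfolding generic_front_def by blast
lemma cusp_ud: "t \<in> cusps \<gamma> \<Longrightarrow> cusp_up \<gamma> t \<or> cusp_down \<gamma> t" using gen unfolding generic_front_def by blast
lemma cross_nc: "(t, s) \<in> crossings \<gamma> \<Longrightarrow> t \<notin> cusps \<gamma> \<and> s \<notin> cusps \<gamma>"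
  using gen unfolding generic_front_def by blast
lemma triple: "t \<in> {0..<1} \<Longrightarrow> s \<in> {0..<1} \<Longrightarrow> r \<in> {0..<1} \<Longrightarrow> t \<noteq> s \<Longrightarrow> s \<noteq> r \<Longrightarrow> t \<noteq> r \<Longrightarrow>
   \<not> (gx \<gamma> t = gx \<gamma> s \<and> gz \<gamma> t = gz \<gamma> s \<and> gx \<gamma> t = gx \<gamma> r \<and> gz \<gamma> t = gz \<gamma> r)"
  using gen unfolding generic_front_def by blast

lemma UC_cross: "(t, s) \<in> undercrossings \<gamma> \<Longrightarrow> (t, s) \<in> crossings \<gamma> \<and> gy \<gamma> s < gy \<gamma> t"
  unfolding undercrossings_def by blast
lemma cross_props: "(t, s) \<in> crossings \<gamma> \<Longrightarrow> t \<in> {0..<1} \<and> s \<in> {0..<1} \<and> t \<noteq> s \<and> gx \<gamma> t = gx \<gamma> s \<and> gz \<gamma> t = gz \<gamma> s"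
  unfolding crossings_def by blast

lemma fin_UC: "finite (undercrossings \<gamma>)"
  using fin_cross finite_subset UC_cross by (metis subrelI)

lemma finB: "finite (breaks \<gamma>)" unfolding breaks_def using fin_cusps fin_UC by simp
lemma Bsub: "breaks \<gamma> \<subseteq> {0..<1}"
  unfolding breaks_def cusps_def using UC_cross cross_props by fastforce

lemma cusp_excl: "\<not> (cusp_up \<gamma> t \<and> cusp_down \<gamma> t)"
proof
  assume "cusp_up \<gamma> t \<and> cusp_down \<gamma> t"
  then obtain e1 e2 where e: "e1 > 0" "strict_mono_on {t-e1<..<t+e1} (\<lambda>r. gz \<gamma> r - gy \<gamma> t * gx \<gamma> r)"
    "e2 > 0" "strict_mono_on {t-e2<..<t+e2} (\<lambda>r. - (gz \<gamma> r - gy \<gamma> t * gx \<gamma> r))"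
    unfolding cusp_up_def cusp_down_def by blast
  define r where "r = t + min e1 e2 / 2"
  have "gz \<gamma> t - gy \<gamma> t * gx \<gamma> t < gz \<gamma> r - gy \<gamma> t * gx \<gamma> r"
    by (rule strict_mono_onD[OF e(2)]) (use e in \<open>auto simp: r_def\<close>)
  moreover have "- (gz \<gamma> t - gy \<gamma> t * gx \<gamma> t) < - (gz \<gamma> r - gy \<gamma> t * gx \<gamma> r)"
    by (rule strict_mono_onD[OF e(4), of t r]) (use e in \<open>auto simp: r_def\<close>)
  ultimately show False by simp
qed

lemma uc_unique: "(t, s) \<in> undercrossings \<gamma> \<Longrightarrow> (t, s') \<in> undercrossings \<gamma> \<Longrightarrow> s' = s"
proof (rule ccontr)
  assume a: "(t, s) \<in> undercrossings \<gamma>" "(t, s') \<in> undercrossings \<gamma>" "s' \<noteq> s"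
  then have "(t, s) \<in> crossings \<gamma>" "(t, s') \<in> crossings \<gamma>" using UC_cross by auto
  then show False using triple[of t s s'] cross_props a(3) by metis
qed

lemma sf_eq: "(t, s) \<in> undercrossings \<gamma> \<Longrightarrow> sf t = s"
  unfolding sf_def by (rule some_equality) (auto intro: uc_unique)

lemma fc_nz: assumes "(t, s) \<in> undercrossings \<gamma>" shows "front_cross \<gamma> s t \<noteq> 0"
proof -
  have c: "(t, s) \<in> crossings \<gamma>" and y: "gy \<gamma> s < gy \<gamma> t" using UC_cross assms by auto
  have "t \<notin> cusps \<gamma>" "s \<notin> cusps \<gamma>" using cross_nc c by auto
  then have "dgx \<gamma> t \<noteq> 0" "dgx \<gamma> s \<noteq> 0" using cross_props[OF c] unfolding cusps_def by auto
  moreover have "\<And>r. dgz \<gamma> r = gy \<gamma> r * dgx \<gamma> r" using leg unfolding legendrian_knot_def by blast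
  then have "front_cross \<gamma> s t = dgx \<gamma> s * dgx \<gamma> t * (gy \<gamma> t - gy \<gamma> s)"
    unfolding front_cross_def by (simp add: algebra_simps)
  ultimately show ?thesis using y by simp
qed

lemma JX: "x \<in> X \<Longrightarrow> J b x \<in> X"
  unfolding J_def sel_def using xt_X by auto

lemma circ: "circ X (breaks \<gamma>) J"
  by unfold_locales (auto simp: finB Bsub JX)

lemma cusp_pt:
  assumes "t \<in> cusps \<gamma>" "x \<in> X"
  shows "((cusp_up \<gamma> t \<longrightarrow> y = u x) \<and> (cusp_down \<gamma> t \<longrightarrow> y = d x)) \<longleftrightarrow> y = J t x"
  using assms cusp_ud[OF assms(1)] cusp_excl[of t]
  by (auto simp: J_def L_def sel_def xt_def)

lemma uc_pt:
  assumes uc: "(t, s) \<in> undercrossings \<gamma>" and X: "x \<in> X" "y \<in> X" "z \<in> X"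
  shows "((front_cross \<gamma> s t > 0 \<longrightarrow> y = op x z) \<and> (front_cross \<gamma> s t < 0 \<longrightarrow> x = op y z))
         \<longleftrightarrow> y = J t x"
proof -
  have tc: "t \<notin> cusps \<gamma>" using uc UC_cross cross_nc by blast
  have nz: "front_cross \<gamma> s t \<noteq> 0" using fc_nz uc by blast
  have Jt: "J t = (if front_cross \<gamma> s t > 0 then S else SI)"
    using tc sf_eq[OF uc] by (simp add: J_def L_def sel_def)
  show ?thesis
  proof (cases "front_cross \<gamma> s t > 0")
    case True
    then show ?thesis using Jt X op\<sigma> by (simp add: xt_def)
  next
    case False
    then have neg: "front_cross \<gamma> s t < 0" using nz by simp
    have "x = \<sigma> y \<longleftrightarrow> y = si0 x" using X s_si si_s by metis
    then show ?thesis using Jt X op\<sigma> False neg by (simp add: xt_def)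
  qed
qed

lemma B_cases: "b \<in> breaks \<gamma> \<Longrightarrow> b \<in> cusps \<gamma> \<or> (\<exists>s. (b, s) \<in> undercrossings \<gamma>)"
  unfolding breaks_def by force

lemma is_col_iff: "is_coloring X op u d \<gamma> c \<longleftrightarrow> circ.acol X (breaks \<gamma>) J c"
proof (cases "\<forall>t. c t \<in> X")
  case False
  then show ?thesis unfolding is_coloring_def circ.acol_def[OF circ] by blast
next
  case cX: True
  have jump: "((\<forall>t\<in>cusps \<gamma>. \<exists>e>0. \<forall>r1\<in>{t-e<..<t}. \<forall>r2\<in>{t<..<t+e}.
         (cusp_up \<gamma> t \<longrightarrow> c r2 = u (c r1)) \<and> (cusp_down \<gamma> t \<longrightarrow> c r2 = d (c r1))) \<and>
     (\<forall>(t, s)\<in>undercrossings \<gamma>. \<exists>e>0. \<forall>r1\<in>{t-e<..<t}. \<forall>r2\<in>{t<..<t+e}.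
         (front_cross \<gamma> s t > 0 \<longrightarrow> c r2 = op (c r1) (c s)) \<and>
         (front_cross \<gamma> s t < 0 \<longrightarrow> c r1 = op (c r2) (c s))))
    \<longleftrightarrow> (\<forall>b\<in>breaks \<gamma>. \<exists>e>0. \<forall>r1\<in>{b-e<..<b}. \<forall>r2\<in>{b<..<b+e}. c r2 = J b (c r1))"
    (is "?A \<and> ?U \<longleftrightarrow> ?J")
  proof
    assume AU: "?A \<and> ?U"
    show ?J
    proof
      fix b assume b: "b \<in> breaks \<gamma>"
      show "\<exists>e>0. \<forall>r1\<in>{b-e<..<b}. \<forall>r2\<in>{b<..<b+e}. c r2 = J b (c r1)"
      proof (cases "b \<in> cusps \<gamma>")
        case True
        then obtain e where e: "e > 0" "\<forall>r1\<in>{b-e<..<b}. \<forall>r2\<in>{b<..<b+e}.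
          (cusp_up \<gamma> b \<longrightarrow> c r2 = u (c r1)) \<and> (cusp_down \<gamma> b \<longrightarrow> c r2 = d (c r1))" using AU by blast
        show ?thesis using e cusp_pt[OF True] cX by blast
      next
        case False
        then obtain s where s: "(b, s) \<in> undercrossings \<gamma>" using B_cases b by blast
        then obtain e where e: "e > 0" "\<forall>r1\<in>{b-e<..<b}. \<forall>r2\<in>{b<..<b+e}.
         (front_cross \<gamma> s b > 0 \<longrightarrow> c r2 = op (c r1) (c s)) \<and>
         (front_cross \<gamma> s b < 0 \<longrightarrow> c r1 = op (c r2) (c s))" using AU by blast
        show ?thesis using e uc_pt[OF s] cX by blast
      qed
    qed
  next
    assume J: ?J
    show "?A \<and> ?U"
    proof
      show ?A
      proof
        fix t assume t: "t \<in> cusps \<gamma>"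
        then have "t \<in> breaks \<gamma>" by (simp add: breaks_def)
        then obtain e where "e > 0" "\<forall>r1\<in>{t-e<..<t}. \<forall>r2\<in>{t<..<t+e}. c r2 = J t (c r1)" using J by blast
        then show "\<exists>e>0. \<forall>r1\<in>{t-e<..<t}. \<forall>r2\<in>{t<..<t+e}.
         (cusp_up \<gamma> t \<longrightarrow> c r2 = u (c r1)) \<and> (cusp_down \<gamma> t \<longrightarrow> c r2 = d (c r1))"
          using cusp_pt[OF t] cX by blast
      qed
      show ?U
      proof (clarify)
        fix t s assume ts: "(t, s) \<in> undercrossings \<gamma>"
        then have "t \<in> breaks \<gamma>" unfolding breaks_def by force
        then obtain e where "e > 0" "\<forall>r1\<in>{t-e<..<t}. \<forall>r2\<in>{t<..<t+e}. c r2 = J t (c r1)" using J by blast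
        then show "\<exists>e>0. \<forall>r1\<in>{t-e<..<t}. \<forall>r2\<in>{t<..<t+e}.
         (front_cross \<gamma> s t > 0 \<longrightarrow> c r2 = op (c r1) (c s)) \<and>
         (front_cross \<gamma> s t < 0 \<longrightarrow> c r1 = op (c r2) (c s))"
          using uc_pt[OF ts] cX by blast
      qed
    qed
  qed
  show ?thesis
    unfolding is_coloring_def circ.acol_def[OF circ] circ.Bp_def[OF circ] breaks_per_def
    by (simp only: jump)
qed

definition kk :: "nat \<Rightarrow> nat" where "kk i = card {b\<in>breaks \<gamma>. L b = i}"

lemma Col_eq: "Col X op u d \<gamma> = card {x\<in>X. F4 S SI UU DD (kk 0) (kk 1) (kk 2) (kk 3) x = x}"
proof -
  interpret circ X "breaks \<gamma>" J by (rule circ)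
  interpret comm4 S SI UU DD by (rule comm)
  have "Col X op u d \<gamma> = card (R ` {c. acol c})"
    unfolding Col_def R_def Bp_def breaks_per_def is_col_iff by simp
  also have "\<dots> = card {x\<in>X. Phi1 x = x}" by (rule count)
  also have "Phi1 = F4 S SI UU DD (kk 0) (kk 1) (kk 2) (kk 3)"
  proof -
    define xs where "xs = sorted_list_of_set (breaks \<gamma>)"
    have "Phi1 = fold (\<lambda>b g. sel S SI UU DD (L b) \<circ> g) xs id"
      unfolding Phi1_def xs_def J_def by simp
    also have "\<dots> = F (cnt L 0 xs) (cnt L 1 xs) (cnt L 2 xs) (cnt L 3 xs) \<circ> id"
      by (rule fold_F) (simp add: L_def)
    moreover have cn: "\<And>i. cnt L i xs = kk i"
      unfolding cnt_def kk_def xs_def using finB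
      by (simp add: distinct_length_filter Int_def conj_commute)
    ultimately show ?thesis by (simp only: cn comp_id)
  qed
  finally show ?thesis .
qed

lemma n_up_eq: "n_up \<gamma> = kk 2"
proof -
  have "{t \<in> cusps \<gamma>. cusp_up \<gamma> t} = {b\<in>breaks \<gamma>. L b = 2}"
    by (auto simp: L_def breaks_def)
  then show ?thesis by (simp add: n_up_def kk_def)
qed

lemma n_down_eq: "n_down \<gamma> = kk 3"
proof -
  have "{t \<in> cusps \<gamma>. cusp_down \<gamma> t} = {b\<in>breaks \<gamma>. L b = 3}"
    using cusp_ud cusp_excl by (auto simp: L_def breaks_def)
  then show ?thesis by (simp add: n_down_def kk_def)
qed

lemma writhe_eq: "writhe \<gamma> = int (kk 0) - int (kk 1)"
proof -
  define U where "U = fst ` undercrossings \<gamma>"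
  have finU: "finite U" using fin_UC U_def by simp
  have UCeq: "undercrossings \<gamma> = (\<lambda>t. (t, sf t)) ` U"
  proof (intro set_eqI iffI)
    fix ts assume "ts \<in> undercrossings \<gamma>"
    then obtain t s where ts: "ts = (t, s)" "(t, s) \<in> undercrossings \<gamma>" by (cases ts) auto
    have "ts = (\<lambda>t. (t, sf t)) t" using ts sf_eq by simp
    moreover have "t \<in> U" using ts U_def by force
    ultimately show "ts \<in> (\<lambda>t. (t, sf t)) ` U" by blast
  next
    fix ts assume "ts \<in> (\<lambda>t. (t, sf t)) ` U"
    then obtain t s where "(t, s) \<in> undercrossings \<gamma>" "ts = (t, sf t)" unfolding U_def by force
    then show "ts \<in> undercrossings \<gamma>" using sf_eq by simp
  qed
  have inj: "inj_on (\<lambda>t. (t, sf t)) U" by (rule inj_onI) simp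
  have "writhe \<gamma> = (\<Sum>t\<in>U. if front_cross \<gamma> (sf t) t > 0 then 1 else -1)"
    unfolding writhe_def UCeq sum.reindex[OF inj] by simp
  also have "\<dots> = int (card {t\<in>U. front_cross \<gamma> (sf t) t > 0}) - int (card {t\<in>U. \<not> front_cross \<gamma> (sf t) t > 0})"
    using finU by (simp add: sum.If_cases Int_def sum_negf)
  also have "{t\<in>U. front_cross \<gamma> (sf t) t > 0} = {b\<in>breaks \<gamma>. L b = 0}"
    unfolding U_def L_def breaks_def using UC_cross cross_nc by force
  also have "{t\<in>U. \<not> front_cross \<gamma> (sf t) t > 0} = {b\<in>breaks \<gamma>. L b = 1}"
    unfolding U_def L_def breaks_def using UC_cross cross_nc by force
  finally show ?thesis by (simp add: kk_def)
qed

end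


theorem theorem5p1:
  fixes \<gamma>1 \<gamma>2 :: "real \<Rightarrow> R3"
    and X :: "'a set" and op :: "'a \<Rightarrow> 'a \<Rightarrow> 'a" and u d :: "'a \<Rightarrow> 'a"
  assumes "legendrian_knot \<gamma>1" and "legendrian_knot \<gamma>2"
    and "generic_front \<gamma>1" and "generic_front \<gamma>2"
    and "same_knot_type \<gamma>1 \<gamma>2"
    and "tb \<gamma>1 = - tb \<gamma>2" and "rot \<gamma>1 = - rot \<gamma>2"
    and "perm_GL_rack X op u d"
  shows "Col X op u d \<gamma>1 = Col X op u d \<gamma>2"
proof -
  obtain \<sigma> where gl: "GL_rack X op u d" and \<sigma>: "bij_betw \<sigma> X X" "\<forall>x\<in>X. \<forall>y\<in>X. op x y = \<sigma> x"
    "\<forall>x\<in>X. u (d x) = the_inv_into X \<sigma> x"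
    using assms(8) unfolding perm_GL_rack_def by blast
  interpret P: prack X op u d \<sigma> by unfold_locales (use gl \<sigma> in auto)
  interpret K1: knot X op u d \<sigma> \<gamma>1 by unfold_locales (use assms in auto)
  interpret K2: knot X op u d \<sigma> \<gamma>2 by unfold_locales (use assms in auto)
  define a where "a = K1.kk 0"
  define b where "b = K1.kk 1"
  define c where "c = K1.kk 2"
  define e where "e = K1.kk 3"
  define a' where "a' = K2.kk 0"
  define b' where "b' = K2.kk 1"
  define c' where "c' = K2.kk 2"
  define e' where "e' = K2.kk 3"
  have r: "(real e - real c) / 2 = - ((real e' - real c') / 2)"
    using assms(7) unfolding rot_def K1.n_up_eq K1.n_down_eq K2.n_up_eq K2.n_down_eq c_def e_def c'_def e'_def .
  have t: "(real a - real b) - (real c + real e) / 2 = - ((real a' - real b') - (real c' + real e') / 2)"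
    using assms(6) unfolding tb_def K1.n_up_eq K1.n_down_eq K2.n_up_eq K2.n_down_eq K1.writhe_eq K2.writhe_eq
      a_def b_def c_def e_def a'_def b'_def c'_def e'_def by simp
  have r1: "real e + real e' = real c + real c'" using r by (simp add: field_simps)
  have r2: "real (e + e') = real (c + c')" using r1 by simp
  then have ee: "e + e' = c + c'" by (simp only: of_nat_eq_iff)
  have "2 * (real a - real b) - (real c + real e) = - (2 * (real a' - real b') - (real c' + real e'))"
    using t by (simp add: field_simps)
  then have "real a + real a' = real b + real b' + (real c + real c')" using r1 by simp
  then have "real (a + a') = real (b + b' + (c + c'))" by simp
  then have aa: "a + a' = b + b' + (c + c')" by (simp only: of_nat_eq_iff)
  have "Col X op u d \<gamma>1 = card {x\<in>X. F4 P.S P.SI P.UU P.DD a b c e x = x}"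
    using K1.Col_eq a_def b_def c_def e_def by simp
  also have "{x\<in>X. F4 P.S P.SI P.UU P.DD a b c e x = x} = {x\<in>X. F4 P.S P.SI P.UU P.DD a' b' c' e' x = x}"
    by (rule P.Fix_eq[OF aa refl ee])
  also have "card \<dots> = Col X op u d \<gamma>2"
    using K2.Col_eq a'_def b'_def c'_def e'_def by simp
  finally show ?thesis .
qed

end
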